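(* In the setting of the context, assume $\log(n)q(n)\to\delta^*\in(0,\infty)$, $m(n)^{-1}\log n\to0$ and $m(n)^{-1}v_n\to\infty$. Let $i_U=\big\lceil m(n)\frac{H_0-H_-+q(n)}{H_+-H_-}+U\big\rceil$. Then $\mathbb P^n_{H_0,\sigma_0}(\widehat i_n=i_U)\to1$.
   Context: $\Theta=[H_-,H_+]\times[\sigma_-,\sigma_+]\subset(0,1)\times(0,\infty)$, $(H_0,\sigma_0)$ interior; under $\mathbb P^n_{H_0,\sigma_0}$ one has a pilot estimator $\widehat H_n$ of $H_0$ and a sequence $v_n\to\infty$ such that $v_n(\widehat H_n-H_0)$ is bounded in probability (in the paper, $\widehat H_n$ is the preaveraged Whittle estimator with window $k(n)=n^{2H_+/(2H_++1)}(1+o(1))$ and $v_n=n^{1/(4H_++2)}$); $q(n)>0$, $m(n)$ positive integers, $U$ a uniform random variable on $[0,1]$ independent of the data (hence of $\widehat H_n$); $\widehat i_n=\big\lceil m(n)\frac{\widehat H_n-H_-+q(n)}{H_+-H_-}+U\big\rceil$. *)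

theory Defs
  imports "HOL-Probability.Probability"
begin

end

theory Submission
  imports Defs
begin

lemma ceil_cross:
  fixes y a eps :: real
  assumes "\<bar>a\<bar> \<le> eps" "ceiling (y+a) \<noteq> ceiling y"
  shows "\<exists>k::int. \<bar>y - k\<bar> \<le> eps"
proof (cases "ceiling (y+a) > ceiling y")
  case True
  then have "y + a > ceiling y" by (simp add: less_ceiling_iff)
  then show ?thesis using assms(1) le_of_int_ceiling[of y]
    by (intro exI[of _ "ceiling y"]) auto
next
  case False
  then have "ceiling (y+a) < ceiling y" using assms(2) by simp
  then have "y + a \<le> ceiling y - 1" by (simp add: ceiling_less_iff)
  moreover have "ceiling y - 1 < y" by linarith
  ultimately show ?thesis using assms(1)
    by (intro exI[of _ "ceiling y - 1"]) auto
qed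

lemma k_range:
  fixes x u eps :: real and k :: int
  assumes "u \<in> {0..1}" "\<bar>x + u - k\<bar> \<le> eps" "eps \<le> 1"
  shows "\<exists>j\<in>{-1,0,1,2::int}. \<bar>u - (ceiling x + j - x)\<bar> \<le> eps"
proof -
  have b: "0 \<le> u" "u \<le> 1" "x + u - k \<le> eps" "x + u - k \<ge> - eps" using assms by auto
  have "real_of_int k > real_of_int (ceiling x) - 2" using b assms(3) ceiling_correct[of x] by linarith
  then have "k - ceiling x \<ge> -1" by linarith
  moreover have "real_of_int k \<le> real_of_int (ceiling x) + 2" using b assms(3) le_of_int_ceiling[of x] by linarith
  then have "k - ceiling x \<le> 2" by linarith
  ultimately have "k - ceiling x \<in> {-1,0,1,2}" by auto
  then show ?thesis using assms(2)
    by (intro bexI[of _ "k - ceiling x"]) (auto simp: abs_if split: if_splits)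
qed

lemma U_small:
  fixes M :: "'a measure" and U :: "'a \<Rightarrow> real" and x eps :: real
  assumes "prob_space M" "U \<in> borel_measurable M"
    "distr M lborel U = uniform_measure lborel {0..1}" "0 < eps"
  shows "measure M {\<omega> \<in> space M. U \<omega> \<notin> {0..1} \<or>
     (\<exists>j\<in>{-1,0,1,2::int}. \<bar>U \<omega> - (ceiling x + j - x)\<bar> \<le> eps)} \<le> 8 * eps"
proof -
  define I where "I = (\<lambda>j::int. {ceiling x + j - x - eps .. ceiling x + j - x + eps})"
  define T where "T = -{0..1::real} \<union> I (-1) \<union> I 0 \<union> I 1 \<union> I 2"
  define N where "N = uniform_measure lborel {0..1::real}"
  have I_sets: "I j \<in> sets borel" for j unfolding I_def by simp
  have T_sets: "T \<in> sets borel" unfolding T_def using I_sets by auto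
  have Um: "U \<in> measurable M lborel" using assms(2) by simp
  have eq: "{\<omega> \<in> space M. U \<omega> \<notin> {0..1} \<or>
     (\<exists>j\<in>{-1,0,1,2::int}. \<bar>U \<omega> - (ceiling x + j - x)\<bar> \<le> eps)} = U -` T \<inter> space M"
    unfolding T_def I_def by (auto simp: abs_le_iff)
  have "measure M (U -` T \<inter> space M) = measure N T"
    using measure_distr[OF Um, of T] T_sets assms(3) by (simp add: N_def)
  have NP: "prob_space N" unfolding N_def by (rule prob_space_uniform_measure) auto
  interpret N: prob_space N by (rule NP)
  have sN: "sets N = sets borel" unfolding N_def by simp
  have NI: "measure N (I j) \<le> 2 * eps" for j
  proof -
    have "measure N (I j) = measure lborel ({0..1} \<inter> I j) / measure lborel {0..1::real}"
      unfolding N_def using I_sets by (subst measure_uniform_measure) auto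
    also have "\<dots> = measure lborel ({0..1} \<inter> I j)" by simp
    also have "\<dots> \<le> measure lborel (I j)"
      by (rule measure_mono_fmeasurable) (auto simp: I_def fmeasurable_def emeasure_lborel_Icc_eq)
    also have "\<dots> = 2 * eps" unfolding I_def using assms(4) by simp
    finally show ?thesis .
  qed
  have N0: "measure N (-{0..1}) = 0"
    unfolding N_def by (subst measure_uniform_measure) auto
  have "measure N T \<le> measure N (-{0..1}) + measure N (I (-1)) + measure N (I 0) + measure N (I 1) + measure N (I 2)"
  proof -
    have s1: "-{0..1::real} \<in> sets N" "\<And>j. I j \<in> sets N" using sN I_sets by auto
    let ?A = "-{0..1::real}"
    have "measure N T \<le> measure N (?A \<union> I (-1) \<union> I 0 \<union> I 1) + measure N (I 2)"
      unfolding T_def by (rule measure_Un_le) (use s1 in auto)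
    moreover have "measure N (?A \<union> I (-1) \<union> I 0 \<union> I 1) \<le> measure N (?A \<union> I (-1) \<union> I 0) + measure N (I 1)"
      by (rule measure_Un_le) (use s1 in auto)
    moreover have "measure N (?A \<union> I (-1) \<union> I 0) \<le> measure N (?A \<union> I (-1)) + measure N (I 0)"
      by (rule measure_Un_le) (use s1 in auto)
    moreover have "measure N (?A \<union> I (-1)) \<le> measure N ?A + measure N (I (-1))"
      by (rule measure_Un_le) (use s1 in auto)
    ultimately show ?thesis by linarith
  qed
  also have "\<dots> \<le> 8 * eps" using NI[of "-1"] NI[of 0] NI[of 1] NI[of 2] N0 by linarith
  finally show ?thesis using eq \<open>measure M (U -` T \<inter> space M) = measure N T\<close> by simp
qed


theorem lemma6p3:
  fixes M :: "nat \<Rightarrow> 'a measure"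
    and Hhat U :: "nat \<Rightarrow> 'a \<Rightarrow> real"
    and Hm Hp sm sp H0 s0 \<delta> :: real
    and v q :: "nat \<Rightarrow> real"
    and m :: "nat \<Rightarrow> nat"
  assumes Theta: "0 < Hm" "Hm < Hp" "Hp < 1" "0 < sm" "sm < sp"
    and interior: "Hm < H0" "H0 < Hp" "sm < s0" "s0 < sp"
    and prob: "\<And>n. prob_space (M n)"
    and Hhat_rv: "\<And>n. Hhat n \<in> borel_measurable (M n)"
    and U_rv: "\<And>n. U n \<in> borel_measurable (M n)"
    and U_unif: "\<And>n. distr (M n) lborel (U n) = uniform_measure lborel {0..1}"
    and indep: "\<And>n. prob_space.indep_var (M n) borel (Hhat n) borel (U n)"
    and v_inf: "filterlim v at_top sequentially"
    and tight: "\<And>\<epsilon>. \<epsilon> > 0 \<Longrightarrow> \<exists>K. \<forall>n.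
         measure (M n) {\<omega> \<in> space (M n). \<bar>v n * (Hhat n \<omega> - H0)\<bar> > K} \<le> \<epsilon>"
    and q_pos: "\<And>n. q n > 0"
    and m_pos: "\<And>n. m n > 0"
    and q_lim: "(\<lambda>n. ln (real n) * q n) \<longlonglongrightarrow> \<delta>" and \<delta>_pos: "0 < \<delta>"
    and m_log: "(\<lambda>n. ln (real n) / real (m n)) \<longlonglongrightarrow> 0"
    and m_v: "filterlim (\<lambda>n. v n / real (m n)) at_top sequentially"
  shows "(\<lambda>n. measure (M n) {\<omega> \<in> space (M n).
            \<lceil>real (m n) * (Hhat n \<omega> - Hm + q n) / (Hp - Hm) + U n \<omega>\<rceil> =
            \<lceil>real (m n) * (H0 - Hm + q n) / (Hp - Hm) + U n \<omega>\<rceil>}) \<longlonglongrightarrow> 1"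
proof (rule LIMSEQ_I)
  fix r :: real assume r: "0 < r"
  define S where "S = (\<lambda>n. {\<omega> \<in> space (M n).
            \<lceil>real (m n) * (Hhat n \<omega> - Hm + q n) / (Hp - Hm) + U n \<omega>\<rceil> =
            \<lceil>real (m n) * (H0 - Hm + q n) / (Hp - Hm) + U n \<omega>\<rceil>})"
  define eps where "eps = min (r/32) (1/2)"
  have eps: "0 < eps" "eps \<le> 1" "eps \<le> r/32" using r by (auto simp: eps_def)
  obtain K where K: "\<And>n. measure (M n) {\<omega> \<in> space (M n). \<bar>v n * (Hhat n \<omega> - H0)\<bar> > K} \<le> r/4"
    using tight[of "r/4"] r by auto
  define C where "C = max 1 (\<bar>K\<bar> / (eps * (Hp - Hm)) + 1)"
  have C: "C \<ge> 1" "K \<le> C * eps * (Hp - Hm)"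
  proof -
    show "C \<ge> 1" unfolding C_def by simp
    have pos: "eps * (Hp - Hm) > 0" using eps Theta by simp
    have "\<bar>K\<bar> / (eps * (Hp - Hm)) \<le> C" unfolding C_def by simp
    then have "\<bar>K\<bar> \<le> C * (eps * (Hp - Hm))" using pos by (simp add: divide_le_eq)
    then show "K \<le> C * eps * (Hp - Hm)" by (simp add: mult.assoc)
  qed
  have "eventually (\<lambda>n. C \<le> v n / real (m n)) sequentially"
    using m_v by (simp add: filterlim_at_top)
  then obtain no where no: "\<And>n. n \<ge> no \<Longrightarrow> C \<le> v n / real (m n)"
    by (auto simp: eventually_sequentially)
  show "\<exists>no. \<forall>n\<ge>no. norm (measure (M n) (S n) - 1) < r"
  proof (intro exI allI impI)
    fix n assume n: "n \<ge> no"
    interpret P: prob_space "M n" by (rule prob)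
    have [measurable]: "Hhat n \<in> borel_measurable (M n)" "U n \<in> borel_measurable (M n)"
      using Hhat_rv U_rv by auto
    define A where "A = {\<omega> \<in> space (M n). \<bar>v n * (Hhat n \<omega> - H0)\<bar> > K}"
    define B where "B = {\<omega> \<in> space (M n). U n \<omega> \<notin> {0..1} \<or>
     (\<exists>j\<in>{-1,0,1,2::int}. \<bar>U n \<omega> - (ceiling (real (m n) * (H0 - Hm + q n) / (Hp - Hm)) + j - real (m n) * (H0 - Hm + q n) / (Hp - Hm))\<bar> \<le> eps)}"
    have Smeas: "S n \<in> sets (M n)" unfolding S_def by measurable
    have Ameas: "A \<in> sets (M n)" unfolding A_def by measurable
    have Bmeas: "B \<in> sets (M n)" unfolding B_def by measurable
    have mA: "measure (M n) A \<le> r/4" using K unfolding A_def .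
    have mB: "measure (M n) B \<le> 8 * eps" unfolding B_def
      by (rule U_small[OF prob U_rv U_unif eps(1)])
    have vm: "C * real (m n) \<le> v n" using no[OF n] m_pos[of n]
      by (simp add: le_divide_eq)
    have cover: "space (M n) \<subseteq> S n \<union> A \<union> B"
    proof
      fix \<omega> assume w: "\<omega> \<in> space (M n)"
      show "\<omega> \<in> S n \<union> A \<union> B"
      proof (rule ccontr)
        assume "\<omega> \<notin> S n \<union> A \<union> B"
        then have nS: "\<omega> \<notin> S n" and nA: "\<omega> \<notin> A" and nB: "\<omega> \<notin> B" by auto
        define x where "x = real (m n) * (H0 - Hm + q n) / (Hp - Hm)"
        define a where "a = real (m n) * (Hhat n \<omega> - H0) / (Hp - Hm)"
        define d where "d = Hhat n \<omega> - H0"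
        have xa: "real (m n) * (Hhat n \<omega> - Hm + q n) / (Hp - Hm) = x + a"
          unfolding x_def a_def by (simp add: add_divide_distrib[symmetric] algebra_simps)
        have ne: "ceiling ((x + U n \<omega>) + a) \<noteq> ceiling (x + U n \<omega>)"
          using nS w xa unfolding S_def x_def by (simp add: add_ac)
        have vd: "\<bar>v n * d\<bar> \<le> K" using nA w unfolding A_def d_def by auto
        have "C * (real (m n) * \<bar>d\<bar>) \<le> v n * \<bar>d\<bar>"
          using vm by (simp add: mult_right_mono mult.assoc[symmetric])
        also have "\<dots> \<le> K"
        proof -
          have "C * real (m n) > 0" using C(1) m_pos[of n] by simp
          then have "v n > 0" using vm by linarith
          then have "v n * \<bar>d\<bar> = \<bar>v n * d\<bar>" by (simp add: abs_mult)
          then show ?thesis using vd by simp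
        qed
        also have "\<dots> \<le> C * (eps * (Hp - Hm))" using C by (simp add: mult.assoc)
        finally have "real (m n) * \<bar>d\<bar> \<le> eps * (Hp - Hm)" using C(1) by simp
        then have aeps: "\<bar>a\<bar> \<le> eps" unfolding a_def d_def using Theta
          by (simp add: abs_mult divide_le_eq)
        obtain k :: int where k: "\<bar>x + U n \<omega> - k\<bar> \<le> eps"
          using ceil_cross[OF aeps ne] by auto
        show False
        proof (cases "U n \<omega> \<in> {0..1}")
          case True
          from k_range[OF True k eps(2)] nB w show False unfolding B_def x_def by auto
        next
          case False
          then show False using nB w unfolding B_def by auto
        qed
      qed
    qed
    have "1 = measure (M n) (space (M n))" by (simp add: P.prob_space)
    also have "\<dots> \<le> measure (M n) (S n \<union> A \<union> B)"
      using cover Smeas Ameas Bmeas by (intro P.finite_measure_mono) auto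
    also have "\<dots> \<le> measure (M n) (S n) + measure (M n) A + measure (M n) B"
      using Smeas Ameas Bmeas measure_Un_le[of "S n \<union> A" "M n" B] measure_Un_le[of "S n" "M n" A]
      by auto
    finally have lo: "1 - measure (M n) (S n) \<le> r/4 + 8 * eps" using mA mB by linarith
    have hi: "measure (M n) (S n) \<le> 1" by (rule P.prob_le_1)
    show "norm (measure (M n) (S n) - 1) < r" using lo hi eps r by auto
  qed
qed

end
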